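(* Let $p\equiv 1\pmod 8$ be prime and write $p=s^2+t^2$ with integers $s\equiv 1\pmod 4$ and $t>0$. Let $g$ be a generator of $\mathbb{Z}_p^\ast$, put $G_j=\{g^{4k+j}:k\in\mathbb{Z}\}$ ($j=0,1,2,3$), and assume $g$ is chosen so that $\#\{b\in G_0:b+1\in G_1\}>\#\{b\in G_0:b+1\in G_3\}$. Let \[a=\frac{1-\sqrt{1+t^2}}{t}+i\,\frac{\sqrt{-2+2\sqrt{1+t^2}}}{t},\qquad (c_0,c_1,c_2,c_3)=(a,-a,\overline a,-\overline a)\] (or any cyclic permutation of this quadruple), and define $x=(x_k)_{k\in\mathbb{Z}_p}$ by $x_k=c_j$ for $k\in G_j$ and $x_0=-\frac{p-1}{4}(c_0+c_1+c_2+c_3)-1$. Then the $(p+1)\times(p+1)$ matrix whose first row and first column consist of $1$'s and whose lower right $p\times p$ block is $\mathrm{Circ}(x)$ is a complex Hadamard matrix.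
   Context: $\mathrm{Circ}(x)$ is the $p\times p$ matrix with $(i,j)$ entry $x_{j-i}$, indices modulo $p$. A complex Hadamard matrix of order $n$ is an $n\times n$ complex matrix with all entries of modulus $1$ satisfying $HH^\ast=nI_n$. *)

theory Defs
  imports "HOL-Analysis.Analysis" "HOL-Number_Theory.Number_Theory"
begin

text \<open>Matrices of order n are represented as functions nat => nat => complex,
  only the entries with indices below n being relevant.\<close>

definition complex_hadamard :: "nat \<Rightarrow> (nat \<Rightarrow> nat \<Rightarrow> complex) \<Rightarrow> bool" where
  "complex_hadamard n H \<longleftrightarrow>
     (\<forall>i<n. \<forall>j<n. norm (H i j) = 1) \<and>
     (\<forall>i<n. \<forall>j<n. (\<Sum>k<n. H i k * cnj (H j k)) = (if i = j then of_nat n else 0))"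

definition circ :: "nat \<Rightarrow> (nat \<Rightarrow> complex) \<Rightarrow> nat \<Rightarrow> nat \<Rightarrow> complex" where
  "circ p x i j = x ((j + p - i) mod p)"

definition bordered_circ :: "nat \<Rightarrow> (nat \<Rightarrow> complex) \<Rightarrow> nat \<Rightarrow> nat \<Rightarrow> complex" where
  "bordered_circ p x i j = (if i = 0 \<or> j = 0 then 1 else circ p x (i - 1) (j - 1))"

definition cyc_class :: "nat \<Rightarrow> nat \<Rightarrow> nat \<Rightarrow> nat set" where
  "cyc_class p g j = {(g ^ (4 * k + j)) mod p | k. True}"

end

theory Submission
  imports Defs
begin


locale qr =
  fixes p g :: nat
  assumes prime: "prime p" and p8: "p mod 8 = 1" and prim: "residue_primroot p g"
begin

lemma p_gt: "p > 2" using prime p8 prime_gt_1_nat[OF prime] by (cases "p = 2") auto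

lemma four_dvd: "4 dvd (p - 1)"
  using p8 by presburger

lemma eight_dvd: "8 dvd (p - 1)"
  using p8 by presburger

lemma bij: "bij_betw (\<lambda>i. g ^ i mod p) {..<p-1} {0<..<p}"
  using residue_primroot_is_generator[OF _ prim] p_gt totient_prime[OF prime] totatives_prime[OF prime]
  by auto

definition ind :: "nat \<Rightarrow> nat" where
  "ind u = inv_into {..<p-1} (\<lambda>i. g ^ i mod p) (u mod p)"

lemma ind_mod[simp]: "ind (u mod p) = ind u" by (simp add: ind_def)

lemma mem_img: "u mod p \<noteq> 0 \<Longrightarrow> u mod p \<in> (\<lambda>i. g ^ i mod p) ` {..<p-1}"
proof -
  assume "u mod p \<noteq> 0"
  then have "u mod p \<in> {0<..<p}" using p_gt by simp
  then show ?thesis using bij unfolding bij_betw_def by simp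
qed

lemma ind_lt: "u mod p \<noteq> 0 \<Longrightarrow> ind u < p - 1"
  unfolding ind_def using inv_into_into[OF mem_img] by blast

lemma pow_ind: "u mod p \<noteq> 0 \<Longrightarrow> g ^ ind u mod p = u mod p"
  unfolding ind_def using f_inv_into_f[OF mem_img] by blast

lemma coprime_g: "coprime p g" using prim by (simp add: residue_primroot_def)

lemma fermat_g: "[g ^ (p - 1) = 1] (mod p)"
  using euler_theorem[of g p] prime coprime_g by (simp add: coprime_commute totient_prime)

lemma gpow_mod: "g ^ k mod p = g ^ (k mod (p - 1)) mod p"
proof -
  have "[(g ^ (p - 1)) ^ (k div (p - 1)) = 1 ^ (k div (p - 1))] (mod p)"
    by (rule cong_pow[OF fermat_g])
  then have "[g ^ ((p - 1) * (k div (p - 1))) = 1] (mod p)"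
    by (simp add: power_mult)
  then have "[g ^ ((p - 1) * (k div (p - 1))) * g ^ (k mod (p - 1)) = 1 * g ^ (k mod (p - 1))] (mod p)"
    by (rule cong_mult) simp
  then show ?thesis by (simp add: cong_def power_add[symmetric])
qed

lemma ind_pow: "ind (g ^ k) = k mod (p - 1)"
proof -
  have "ind (g ^ k) = inv_into {..<p-1} (\<lambda>i. g ^ i mod p) (g ^ (k mod (p - 1)) mod p)"
    by (simp add: ind_def gpow_mod[of k])
  also have "\<dots> = k mod (p - 1)"
    using bij p_gt unfolding bij_betw_def by (intro inv_into_f_f) auto
  finally show ?thesis .
qed

lemma nz_mult: "u mod p \<noteq> 0 \<Longrightarrow> v mod p \<noteq> 0 \<Longrightarrow> (u * v) mod p \<noteq> 0"
  using prime by (simp add: prime_dvd_mult_iff flip: dvd_eq_mod_eq_0)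

lemma ind_mult: assumes "u mod p \<noteq> 0" "v mod p \<noteq> 0"
  shows "ind (u * v) = (ind u + ind v) mod (p - 1)"
proof -
  have "(u * v) mod p = ((u mod p) * (v mod p)) mod p" by (simp add: mod_mult_eq)
  also have "\<dots> = ((g ^ ind u mod p) * (g ^ ind v mod p)) mod p" using assms pow_ind by simp
  also have "\<dots> = g ^ (ind u + ind v) mod p" by (simp add: mod_mult_eq power_add)
  finally have "ind ((u * v) mod p) = ind (g ^ (ind u + ind v) mod p)" by simp
  then have "ind (u * v) = ind (g ^ (ind u + ind v))" by simp
  then show ?thesis by (simp add: ind_pow)
qed

definition e :: "nat \<Rightarrow> nat" where "e u = ind u mod 4"

lemma e_mod[simp]: "e (u mod p) = e u" by (simp add: e_def)
lemma e_lt: "e u < 4" by (simp add: e_def)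

lemma e_mult: assumes "u mod p \<noteq> 0" "v mod p \<noteq> 0"
  shows "e (u * v) = (e u + e v) mod 4"
  using ind_mult[OF assms] four_dvd by (simp add: e_def mod_mod_cancel mod_add_eq)

lemma e_pow: "e (g ^ k) = k mod 4"
  using four_dvd by (simp add: e_def ind_pow mod_mod_cancel)

lemma e_one: "e 1 = 0" using e_pow[of 0] by simp



lemma g_nz: "g ^ k mod p \<noteq> 0"
proof
  assume "g ^ k mod p = 0"
  then have "p dvd g ^ k" by auto
  then have pg: "p dvd g" by (rule prime_dvd_power[OF prime])
  have "gcd p g = 1" using coprime_g by simp
  moreover have "p dvd gcd p g" using pg by (intro gcd_greatest) auto
  ultimately have "p dvd 1" by simp
  then show False using p_gt by simp
qed

lemma ord_g: "ord p g = p - 1"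
  using prim prime by (simp add: residue_primroot_def totient_prime)


lemma e_neg1: "e (p - 1) = 0"
proof -
  define h where "h = g ^ ((p - 1) div 2)"
  have "(p-1) div 2 + (p-1) div 2 = p - 1" using eight_dvd by presburger
  then have "h * h = g ^ (p - 1)" unfolding h_def by (metis power_add)
  then have hh: "[h * h = 1] (mod p)" using fermat_g by simp
  have h1: "\<not> [h = 1] (mod p)"
  proof
    assume "[h = 1] (mod p)"
    then have "ord p g dvd (p - 1) div 2" unfolding h_def by (simp add: ord_divides')
    then show False using ord_g p_gt by (auto dest!: dvd_imp_le)
  qed
  have "h mod p \<noteq> 0" unfolding h_def by (rule g_nz)
  then have hpos: "h > 0" by (cases h) auto
  have d1: "p dvd (h * h - 1)" using hh cong_to_1_nat by blast
  have eq: "h * h - 1 = (h - 1) * (h + 1)" using hpos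
    by (cases h) (auto simp: algebra_simps)
  have d2: "p dvd (h - 1) * (h + 1)" using d1 unfolding eq .
  have "p dvd (h - 1) \<or> p dvd (h + 1)" using d2 by (simp only: prime_dvd_mult_iff[OF prime])
  moreover have "\<not> p dvd (h - 1)" using h1 hpos cong_altdef_nat[of 1 h p] by (simp add: cong_sym_eq)
  ultimately have "p dvd h + 1" by blast
  have "h mod p = p - 1"
  proof -
    from \<open>p dvd h + 1\<close> have "(h + 1) mod p = 0" by simp
    then have z: "(h mod p + 1) mod p = 0" by (simp add: mod_Suc_eq)
    have lt: "h mod p < p" using p_gt by simp
    show ?thesis
    proof (rule ccontr)
      assume "h mod p \<noteq> p - 1"
      then have "h mod p + 1 < p" using lt by linarith
      then have "(h mod p + 1) mod p = h mod p + 1" by simp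
      then show False using z by simp
    qed
  qed
  then have "e (p - 1) = e h" using e_mod[of h] by simp
  also have "\<dots> = ((p - 1) div 2) mod 4" unfolding h_def by (rule e_pow)
  also have "\<dots> = 0" using eight_dvd by presburger
  finally show ?thesis .
qed

definition chi :: "nat \<Rightarrow> complex" where
  "chi u = (if u mod p = 0 then 0 else \<i> ^ e u)"

lemma chi_mod[simp]: "chi (u mod p) = chi u" by (simp add: chi_def)

lemma i4: "\<i> ^ 4 = (1::complex)" by (simp add: power4_eq_xxxx)

lemma i_pow_mod4: "\<i> ^ (n mod 4) = \<i> ^ n"
proof -
  have a: "\<i> ^ n = \<i> ^ (4 * (n div 4)) * \<i> ^ (n mod 4)"
    by (subst power_add[symmetric]) simp
  have b: "\<i> ^ (4 * (n div 4)) = (1::complex)" by (simp add: power_mult i4)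
  show ?thesis using a b by (metis mult.left_neutral)
qed

lemma chi_mult: "chi (u * v) = chi u * chi v"
proof (cases "u mod p = 0 \<or> v mod p = 0")
  case True
  then have "p dvd u \<or> p dvd v" by auto
  then have "p dvd u * v" by auto
  then have "(u * v) mod p = 0" by simp
  then show ?thesis using True by (auto simp: chi_def)
next
  case False
  then have nz: "u mod p \<noteq> 0" "v mod p \<noteq> 0" by auto
  have "chi (u * v) = \<i> ^ e (u * v)" using nz_mult[OF nz] by (simp add: chi_def)
  also have "\<dots> = \<i> ^ ((e u + e v) mod 4)" using e_mult[OF nz] by simp
  also have "\<dots> = \<i> ^ e u * \<i> ^ e v" by (simp only: i_pow_mod4 power_add)
  also have "\<dots> = chi u * chi v" using nz by (simp add: chi_def)
  finally show ?thesis .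
qed

lemma chi_norm: "u mod p \<noteq> 0 \<Longrightarrow> chi u * cnj (chi u) = 1"
  by (simp add: chi_def power_mult_distrib[symmetric])

lemma chi_zero[simp]: "chi 0 = 0" by (simp add: chi_def)
lemma chi_one[simp]: "chi 1 = 1" using p_gt e_one by (simp add: chi_def)


lemma affine_reindex:
  assumes a: "a mod p \<noteq> 0"
  shows "(\<Sum>u<p. F ((a * u + b) mod p)) = (\<Sum>u<p. F u)"
proof -
  let ?h = "\<lambda>u. (a * u + b) mod p"
  have inj: "inj_on ?h {..<p}"
  proof
    fix u v assume u: "u \<in> {..<p}" and v: "v \<in> {..<p}" and eq: "?h u = ?h v"
    then have "[a * u + b = a * v + b] (mod p)" by (simp add: cong_def)
    then have "[a * u = a * v] (mod p)" by (simp add: cong_add_rcancel_nat)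
    moreover have "coprime a p" using a prime
      by (metis dvd_eq_mod_eq_0 prime_imp_coprime coprime_commute)
    ultimately have "[u = v] (mod p)" by (simp add: cong_mult_lcancel_nat)
    then show "u = v" using u v by (simp add: cong_def)
  qed
  have img: "?h ` {..<p} = {..<p}"
    by (rule endo_inj_surj[OF _ _ inj]) (use p_gt in auto)
  have "(\<Sum>u<p. F (?h u)) = sum F (?h ` {..<p})"
    using sum.reindex[OF inj, of F] by simp
  then show ?thesis using img by simp
qed

lemma sum_shift_split: "(\<Sum>u<p. F u) = F 0 + (\<Sum>u\<in>{0<..<p}. F u)"
proof -
  have "{..<p} = insert 0 {0<..<p}" using p_gt by auto
  then show ?thesis by simp
qed

definition minv :: "nat \<Rightarrow> nat" where "minv u = u ^ (p - 2) mod p"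

lemma minv_mul: assumes "u mod p \<noteq> 0" shows "(u * minv u) mod p = 1"
proof -
  have "\<not> p dvd u" using assms by auto
  then have "[u ^ (p - 1) = 1] (mod p)" using fermat_theorem[OF prime] by blast
  moreover have "u ^ (p - 1) = u * u ^ (p - 2)" using p_gt
    by (metis Suc_diff_Suc Suc_1 lessI numeral_2_eq_2 power_Suc order.strict_trans)
  ultimately have "(u * u ^ (p - 2)) mod p = 1" using p_gt by (simp add: cong_def)
  then show ?thesis by (simp add: minv_def mod_mult_right_eq)
qed

lemma minv_nz: assumes "u mod p \<noteq> 0" shows "minv u mod p \<noteq> 0"
proof
  assume z: "minv u mod p = 0"
  have "(u * minv u) mod p = (u * (minv u mod p)) mod p" by (simp only: mod_mult_right_eq)
  also have "\<dots> = 0" using z by simp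
  finally show False using minv_mul[OF assms] by simp
qed

lemma minv_lt: "minv u < p" using p_gt by (simp add: minv_def)

lemma minv_unique: assumes "u mod p \<noteq> 0" "(u * v) mod p = 1" shows "v mod p = minv u"
proof -
  have "(minv u * (u * v)) mod p = (minv u * ((u * v) mod p)) mod p" by (simp only: mod_mult_right_eq)
  then have e1: "(minv u * (u * v)) mod p = minv u mod p" using assms(2) by simp
  have "minv u * (u * v) = (u * minv u) * v" by (simp add: ac_simps)
  then have "(minv u * (u * v)) mod p = (((u * minv u) mod p) * v) mod p" by (simp only: mod_mult_left_eq)
  then have e2: "(minv u * (u * v)) mod p = v mod p" using minv_mul[OF assms(1)] by simp
  show ?thesis using e1 e2 minv_lt by simp
qed

lemma minv_minv: "u mod p \<noteq> 0 \<Longrightarrow> minv (minv u) = u mod p"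
  using minv_unique[OF minv_nz, of u u] minv_mul[of u] by (simp add: mult.commute)

lemma minv_reindex: "(\<Sum>u\<in>{0<..<p}. F (minv u)) = (\<Sum>u\<in>{0<..<p}. F u)"
proof -
  have inj: "inj_on minv {0<..<p}"
  proof
    fix u v assume u: "u \<in> {0<..<p}" and v: "v \<in> {0<..<p}" and eq: "minv u = minv v"
    then have "minv (minv u) = minv (minv v)" by simp
    moreover have "minv (minv u) = u" using u minv_minv[of u] by simp
    moreover have "minv (minv v) = v" using v minv_minv[of v] by simp
    ultimately show "u = v" by simp
  qed
  have sub: "minv ` {0<..<p} \<subseteq> {0<..<p}"
  proof
    fix y assume "y \<in> minv ` {0<..<p}"
    then obtain u where u: "u \<in> {0<..<p}" and y: "y = minv u" by blast
    have "u mod p \<noteq> 0" using u by simp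
    then have "minv u mod p \<noteq> 0" by (rule minv_nz)
    then have "minv u \<noteq> 0" by (cases "minv u") auto
    then show "y \<in> {0<..<p}" using y minv_lt[of u] by simp
  qed
  have img: "minv ` {0<..<p} = {0<..<p}"
    by (rule endo_inj_surj[OF _ sub inj]) simp
  have "(\<Sum>u\<in>{0<..<p}. F (minv u)) = sum F (minv ` {0<..<p})"
    using sum.reindex[OF inj, of F] by simp
  then show ?thesis using img by simp
qed

lemma chi_minv: "u mod p \<noteq> 0 \<Longrightarrow> chi (minv u) = cnj (chi u)"
proof -
  assume nz: "u mod p \<noteq> 0"
  have "chi (u * minv u) = chi ((u * minv u) mod p)" by simp
  also have "\<dots> = 1" using minv_mul[OF nz] chi_one by simp
  finally have "chi u * chi (minv u) = 1" using chi_mult[of u "minv u"] by simp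
  note h1 = this
  have h2: "cnj (chi u) * chi u = 1" using chi_norm[OF nz] by (simp add: mult.commute)
  have "chi (minv u) = (cnj (chi u) * chi u) * chi (minv u)" using h2 by simp
  also have "\<dots> = cnj (chi u) * (chi u * chi (minv u))" by (simp only: mult.assoc)
  also have "\<dots> = cnj (chi u)" using h1 by simp
  finally show ?thesis .
qed

lemma sum4: "(\<Sum>i<4::nat. F i) = F 0 + F 1 + F 2 + F 3"
  by (simp add: eval_nat_numeral)

lemma sum_mod4: "(\<Sum>k<4*n. F (k mod 4)) = of_nat n * (\<Sum>i<4. F i)"
proof (induction n)
  case 0 then show ?case by simp
next
  case (Suc n)
  have e4: "4 * Suc n = Suc (Suc (Suc (Suc (4*n))))" by simp
  have m0: "(4*n) mod 4 = 0" and m1: "Suc (4*n) mod 4 = 1" and m2: "Suc (Suc (4*n)) mod 4 = 2"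
    and m3: "Suc (Suc (Suc (4*n))) mod 4 = 3" by presburger+
  have "(\<Sum>k<4 * Suc n. F (k mod 4)) = (\<Sum>k<4*n. F (k mod 4)) + F 0 + F 1 + F 2 + F 3"
    unfolding e4 by (simp only: sum.lessThan_Suc m0 m1 m2 m3)
  also have "\<dots> = of_nat n * (\<Sum>i<4. F i) + (\<Sum>i<4. F i)"
    using Suc.IH by (simp only: sum4 add.assoc)
  also have "\<dots> = of_nat (Suc n) * (\<Sum>i<4. F i)" by (simp add: distrib_right add.commute)
  finally show ?case .
qed

definition f where "f = (p - 1) div 4"

lemma sum_e: "(\<Sum>u\<in>{0<..<p}. F (e u)) = of_nat f * (\<Sum>i<4. F i)"
proof -
  have "(\<Sum>u\<in>{0<..<p}. F (e u)) = (\<Sum>k<p-1. F (e (g ^ k mod p)))"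
    using sum.reindex_bij_betw[OF bij, of "\<lambda>u. F (e u)"] by simp
  also have "\<dots> = (\<Sum>k<p-1. F (k mod 4))" by (simp add: e_pow)
  also have "p - 1 = 4 * f" using four_dvd by (simp add: f_def)
  finally show ?thesis by (simp add: sum_mod4)
qed

lemma card_e: "i < 4 \<Longrightarrow> card {u\<in>{0<..<p}. e u = i} = f"
proof -
  assume i: "i < 4"
  have "(\<Sum>u\<in>{0<..<p}. (\<lambda>j. if j = i then 1 else 0) (e u)) = (\<Sum>u\<in>{u\<in>{0<..<p}. e u = i}. (1::nat))"
    by (subst sum.inter_filter) auto
  then have "card {u\<in>{0<..<p}. e u = i} = (\<Sum>u\<in>{0<..<p}. (\<lambda>j. if j = i then 1 else 0) (e u))"
    by simp
  also have "\<dots> = f * (\<Sum>j<4. if j = i then (1::nat) else 0)"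
    using sum_e[of "\<lambda>j. if j = i then (1::nat) else 0"] by simp
  also have "\<dots> = f" using i by simp
  finally show ?thesis .
qed

lemma sum_chi: "(\<Sum>u<p. chi u) = 0"
proof -
  have "(\<Sum>u<p. chi u) = chi 0 + (\<Sum>u\<in>{0<..<p}. chi u)" by (rule sum_shift_split)
  also have "(\<Sum>u\<in>{0<..<p}. chi u) = (\<Sum>u\<in>{0<..<p}. \<i> ^ e u)"
    using p_gt by (intro sum.cong) (auto simp: chi_def)
  also have "\<dots> = of_nat f * (\<Sum>i<4. \<i> ^ i)" by (rule sum_e)
  also have "(\<Sum>i<4::nat. \<i> ^ i) = (0::complex)" by (simp add: numeral_eq_Suc)
  finally show ?thesis by simp
qed

lemma sum_chi2: "(\<Sum>u<p. chi u ^ 2) = 0"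
proof -
  have "(\<Sum>u<p. chi u ^ 2) = chi 0 ^ 2 + (\<Sum>u\<in>{0<..<p}. chi u ^ 2)" by (rule sum_shift_split)
  also have "(\<Sum>u\<in>{0<..<p}. chi u ^ 2) = (\<Sum>u\<in>{0<..<p}. (\<i> ^ e u) ^ 2)"
    using p_gt by (intro sum.cong) (auto simp: chi_def)
  also have "\<dots> = of_nat f * (\<Sum>i<4. (\<i> ^ i) ^ 2)" by (rule sum_e)
  also have "(\<Sum>i<4::nat. (\<i> ^ i) ^ 2) = (0::complex)" by (simp add: numeral_eq_Suc)
  finally show ?thesis by simp
qed

end


context qr begin

lemma chi_Suc0[simp]: "chi (Suc 0) = 1" using chi_one by simp

lemma chi_cong: "a mod p = b mod p \<Longrightarrow> chi a = chi b"
  by (metis chi_mod)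

lemma chi_lin: "chi (w * (z mod p) + k) = chi (w * z + k)"
  by (rule chi_cong) (metis mod_add_left_eq mod_mult_right_eq)

lemma chi_modadd: "chi (z mod p + k) = chi (z + k)"
  by (rule chi_cong) (metis mod_add_left_eq)

lemma chi_addp: "chi (z + p) = chi z"
  by (rule chi_cong) simp

lemma split01: "(\<Sum>w<p. F w) = F 0 + F 1 + (\<Sum>w\<in>{2..<p}. F w)"
proof -
  have "{..<p} = insert 0 (insert 1 {2..<p})" using p_gt by auto
  then show ?thesis by (simp add: add.assoc)
qed

definition J where "J = (\<Sum>u<p. chi u * chi (u + 1))"

lemma inner_v:
  assumes v: "v \<in> {0<..<p}"
  shows "(\<Sum>u<p. chi u * chi (u + 1) * (cnj (chi v) * cnj (chi (v + 1))))
       = (\<Sum>w<p. chi w * (chi (w * v + 1) * cnj (chi (v + 1))))"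
proof -
  have nz: "v mod p \<noteq> 0" using v by simp
  let ?F = "\<lambda>u. chi u * chi (u + 1) * (cnj (chi v) * cnj (chi (v + 1)))"
  have "(\<Sum>u<p. ?F u) = (\<Sum>w<p. ?F ((v * w + 0) mod p))"
    using affine_reindex[OF nz, of ?F 0] by simp
  also have "\<dots> = (\<Sum>w<p. chi w * (chi (w * v + 1) * cnj (chi (v + 1))))"
  proof (intro sum.cong refl)
    fix w
    have a: "chi ((v * w + 0) mod p) = chi v * chi w" by (simp add: chi_mult)
    have b: "chi ((v * w + 0) mod p + 1) = chi (w * v + 1)"
      using chi_modadd[of "v * w" 1] by (simp add: mult.commute)
    have c: "chi v * cnj (chi v) = 1" by (rule chi_norm[OF nz])
    have "?F ((v * w + 0) mod p) = (chi v * cnj (chi v)) * (chi w * (chi (w * v + 1) * cnj (chi (v + 1))))"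
      unfolding a b by (simp add: ac_simps)
    then show "?F ((v * w + 0) mod p) = chi w * (chi (w * v + 1) * cnj (chi (v + 1)))"
      using c by simp
  qed
  finally show ?thesis .
qed

definition T where "T w = (\<Sum>v\<in>{0<..<p}. chi (w * v + 1) * cnj (chi (v + 1)))"

lemma J_sq_T: "J * cnj J = (\<Sum>w<p. chi w * T w)"
proof -
  have "J * cnj J = (\<Sum>u<p. chi u * chi (u + 1)) * (\<Sum>v<p. cnj (chi v) * cnj (chi (v + 1)))"
    by (simp add: J_def)
  also have "\<dots> = (\<Sum>u<p. \<Sum>v<p. chi u * chi (u + 1) * (cnj (chi v) * cnj (chi (v + 1))))"
    by (simp add: sum_product)
  also have "\<dots> = (\<Sum>v<p. \<Sum>u<p. chi u * chi (u + 1) * (cnj (chi v) * cnj (chi (v + 1))))"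
    by (rule sum.swap)
  also have "\<dots> = (\<Sum>v\<in>{0<..<p}. \<Sum>u<p. chi u * chi (u + 1) * (cnj (chi v) * cnj (chi (v + 1))))"
    by (subst sum_shift_split) simp
  also have "\<dots> = (\<Sum>v\<in>{0<..<p}. \<Sum>w<p. chi w * (chi (w * v + 1) * cnj (chi (v + 1))))"
    by (intro sum.cong refl inner_v)
  also have "\<dots> = (\<Sum>w<p. \<Sum>v\<in>{0<..<p}. chi w * (chi (w * v + 1) * cnj (chi (v + 1))))"
    by (rule sum.swap)
  also have "\<dots> = (\<Sum>w<p. chi w * T w)"
    by (simp add: T_def sum_distrib_left)
  finally show ?thesis .
qed

lemma T1: "T 1 = of_nat (p - 2)"
proof -
  have "{0<..<p} = insert (p - 1) {0<..<p-1}" using p_gt by auto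
  then have "T 1 = chi (1 * (p - 1) + 1) * cnj (chi (p - 1 + 1)) + (\<Sum>v\<in>{0<..<p-1}. chi (1 * v + 1) * cnj (chi (v + 1)))"
    unfolding T_def by simp
  also have "chi (1 * (p - 1) + 1) = 0" using p_gt by (simp add: chi_def)
  also have "(\<Sum>v\<in>{0<..<p-1}. chi (1 * v + 1) * cnj (chi (v + 1))) = (\<Sum>v\<in>{0<..<p-1}. 1)"
  proof (intro sum.cong refl)
    fix v assume "v \<in> {0<..<p-1}"
    then have "v + 1 < p" by auto
    then have "(v + 1) mod p \<noteq> 0" by simp
    then show "chi (1 * v + 1) * cnj (chi (v + 1)) = 1" using chi_norm by simp
  qed
  finally show ?thesis using p_gt by simp
qed

lemma T_gen:
  assumes w: "w \<in> {2..<p}"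
  shows "T w = - chi w - 1"
proof -
  define a' where "a' = w * (p - 1) + 1"
  have a'nz: "a' mod p \<noteq> 0"
  proof
    assume z: "a' mod p = 0"
    have "a' + (w - 1) = w * p" using w p_gt unfolding a'_def by (simp add: algebra_simps diff_mult_distrib2)
    then have "(a' + (w - 1)) mod p = 0" by simp
    moreover have "(a' + (w - 1)) mod p = (a' mod p + (w - 1)) mod p" by (simp only: mod_add_left_eq)
    ultimately have "(w - 1) mod p = 0" using z by simp
    moreover have "w - 1 < p" "w - 1 > 0" using w by auto
    ultimately show False by simp
  qed
  let ?phi = "\<lambda>v. chi (w * v + 1) * cnj (chi (v + 1))"
  have full: "(\<Sum>v<p. ?phi v) = T w + 1"
    by (subst sum_shift_split) (simp add: T_def add.commute)
  have "(\<Sum>v<p. ?phi v) = (\<Sum>y<p. ?phi ((1 * y + (p - 1)) mod p))"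
    using affine_reindex[of 1 ?phi "p - 1"] p_gt by simp
  also have "\<dots> = (\<Sum>y<p. chi (w * (y + (p - 1)) + 1) * cnj (chi y))"
  proof (intro sum.cong refl)
    fix y
    have a: "chi (w * ((1 * y + (p - 1)) mod p) + 1) = chi (w * (y + (p - 1)) + 1)"
      using chi_lin[of w "y + (p - 1)" 1] by simp
    have "chi ((1 * y + (p - 1)) mod p + 1) = chi (y + (p - 1) + 1)"
      using chi_modadd[of "y + (p - 1)" 1] by simp
    also have "y + (p - 1) + 1 = y + p" using p_gt by simp
    finally have b: "chi ((1 * y + (p - 1)) mod p + 1) = chi y" using chi_addp by simp
    show "?phi ((1 * y + (p - 1)) mod p) = chi (w * (y + (p - 1)) + 1) * cnj (chi y)"
      using a b by simp
  qed
  also have "\<dots> = (\<Sum>y\<in>{0<..<p}. chi (w * (y + (p - 1)) + 1) * cnj (chi y))"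
    by (subst sum_shift_split) simp
  also have "\<dots> = (\<Sum>y\<in>{0<..<p}. chi (w + a' * minv y))"
  proof (intro sum.cong refl)
    fix y assume y: "y \<in> {0<..<p}"
    then have nz: "y mod p \<noteq> 0" by simp
    have "chi (w * (y + (p - 1)) + 1) * cnj (chi y) = chi ((w * (y + (p - 1)) + 1) * minv y)"
      using chi_minv[OF nz] chi_mult[of "w * (y + (p - 1)) + 1" "minv y"] by simp
    also have "\<dots> = chi (w + a' * minv y)"
    proof (rule chi_cong)
      have "(w * (y + (p - 1)) + 1) * minv y = w * (y * minv y) + a' * minv y"
        unfolding a'_def by (simp add: algebra_simps)
      moreover have "(w * (y * minv y) + a' * minv y) mod p = (w * ((y * minv y) mod p) + a' * minv y) mod p"
        by (metis mod_add_left_eq mod_mult_right_eq)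
      ultimately have "((w * (y + (p - 1)) + 1) * minv y) mod p = (w * ((y * minv y) mod p) + a' * minv y) mod p"
        by simp
      also have "\<dots> = (w + a' * minv y) mod p" using minv_mul[OF nz] by simp
      finally show "((w * (y + (p - 1)) + 1) * minv y) mod p = (w + a' * minv y) mod p" .
    qed
    finally show "chi (w * (y + (p - 1)) + 1) * cnj (chi y) = chi (w + a' * minv y)" .
  qed
  also have "\<dots> = (\<Sum>z\<in>{0<..<p}. chi (w + a' * z))"
    by (rule minv_reindex)
  also have "\<dots> = (\<Sum>z<p. chi ((a' * z + w) mod p)) - chi w"
    using sum_shift_split[of "\<lambda>z. chi ((a' * z + w) mod p)"] by (simp add: add.commute)
  also have "(\<Sum>z<p. chi ((a' * z + w) mod p)) = (\<Sum>z<p. chi z)"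
    by (rule affine_reindex[OF a'nz])
  finally have "T w + 1 = - chi w" using full sum_chi by simp
  then show ?thesis by (simp add: algebra_simps)
qed

lemma J_norm: "J * cnj J = of_nat p"
proof -
  have h1: "1 + (\<Sum>w\<in>{2..<p}. chi w) = 0" using sum_chi split01[of chi] by simp
  have s1: "(\<Sum>w\<in>{2..<p}. chi w) = -1"
  proof -
    have "(\<Sum>w\<in>{2..<p}. chi w) = (1 + (\<Sum>w\<in>{2..<p}. chi w)) - 1" by simp
    then show ?thesis using h1 by simp
  qed
  have h2: "1 + (\<Sum>w\<in>{2..<p}. chi w ^ 2) = 0" using sum_chi2 split01[of "\<lambda>w. chi w ^ 2"] by simp
  have s2: "(\<Sum>w\<in>{2..<p}. chi w ^ 2) = -1"
  proof -
    have "(\<Sum>w\<in>{2..<p}. chi w ^ 2) = (1 + (\<Sum>w\<in>{2..<p}. chi w ^ 2)) - 1" by simp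
    then show ?thesis using h2 by simp
  qed
  have "J * cnj J = chi 0 * T 0 + chi 1 * T 1 + (\<Sum>w\<in>{2..<p}. chi w * T w)"
    unfolding J_sq_T by (rule split01)
  also have "(\<Sum>w\<in>{2..<p}. chi w * T w) = (\<Sum>w\<in>{2..<p}. - (chi w ^ 2) - chi w)"
    by (intro sum.cong refl) (simp add: T_gen algebra_simps power2_eq_square)
  also have "\<dots> = 2" using s1 s2 by (simp add: sum_subtractf sum_negf)
  finally show ?thesis using T1 p_gt by (simp add: of_nat_diff)
qed

end


context qr begin

definition N :: "nat \<Rightarrow> nat \<Rightarrow> nat" where
  "N i j = card {u\<in>{0<..<p-1}. e u = i \<and> e (u + 1) = j}"

lemma sum_group2:
  fixes G :: "nat \<Rightarrow> nat \<Rightarrow> 'a::comm_semiring_1"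
  assumes fin: "finite S" and k: "\<And>u. u \<in> S \<Longrightarrow> k1 u < 4 \<and> k2 u < 4"
  shows "(\<Sum>u\<in>S. G (k1 u) (k2 u)) = (\<Sum>i<4. \<Sum>j<4. of_nat (card {u\<in>S. k1 u = i \<and> k2 u = j}) * G i j)"
proof -
  let ?h = "\<lambda>u. (k1 u, k2 u)"
  have "(\<Sum>u\<in>S. G (k1 u) (k2 u)) = (\<Sum>y\<in>{..<4}\<times>{..<4}. \<Sum>u\<in>{x\<in>S. ?h x = y}. G (k1 u) (k2 u))"
    by (rule sum.group[symmetric]) (use fin k in auto)
  also have "\<dots> = (\<Sum>y\<in>{..<4}\<times>{..<4}. of_nat (card {u\<in>S. k1 u = fst y \<and> k2 u = snd y}) * G (fst y) (snd y))"
  proof (intro sum.cong refl)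
    fix y :: "nat \<times> nat"
    have fe: "{x\<in>S. ?h x = y} = {u\<in>S. k1 u = fst y \<and> k2 u = snd y}" by (cases y) auto
    have "(\<Sum>u\<in>{x\<in>S. ?h x = y}. G (k1 u) (k2 u)) = (\<Sum>u\<in>{u\<in>S. k1 u = fst y \<and> k2 u = snd y}. G (fst y) (snd y))"
      unfolding fe by (intro sum.cong) auto
    then show "(\<Sum>u\<in>{x\<in>S. ?h x = y}. G (k1 u) (k2 u)) = of_nat (card {u\<in>S. k1 u = fst y \<and> k2 u = snd y}) * G (fst y) (snd y)"
      by simp
  qed
  also have "\<dots> = (\<Sum>i<4. \<Sum>j<4. of_nat (card {u\<in>S. k1 u = i \<and> k2 u = j}) * G i j)"
    by (simp add: sum.cartesian_product split_def)
  finally show ?thesis .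
qed

lemma J_N: "J = (\<Sum>i<4. \<Sum>j<4. of_nat (N i j) * \<i> ^ (i + j))"
proof -
  have "{..<p} = insert 0 (insert (p - 1) {0<..<p-1})" using p_gt by auto
  then have "J = chi 0 * chi 1 + chi (p - 1) * chi (p - 1 + 1) + (\<Sum>u\<in>{0<..<p-1}. chi u * chi (u + 1))"
    unfolding J_def using p_gt by (simp add: add.assoc)
  also have "chi (p - 1 + 1) = 0" using p_gt by (simp add: chi_def)
  also have "(\<Sum>u\<in>{0<..<p-1}. chi u * chi (u + 1)) = (\<Sum>u\<in>{0<..<p-1}. (\<lambda>i j. \<i> ^ (i + j)) (e u) (e (u + 1)))"
  proof (intro sum.cong refl)
    fix u assume "u \<in> {0<..<p-1}"
    then have "u mod p \<noteq> 0" "(u + 1) mod p \<noteq> 0" by auto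
    then show "chi u * chi (u + 1) = (\<lambda>i j. \<i> ^ (i + j)) (e u) (e (u + 1))"
      by (simp add: chi_def power_add)
  qed
  also have "\<dots> = (\<Sum>i<4. \<Sum>j<4. of_nat (N i j) * \<i> ^ (i + j))"
    unfolding N_def by (rule sum_group2) (auto simp: e_lt)
  finally show ?thesis by simp
qed


lemma e_neg: assumes "0 < z" "z < p" shows "e (p - z) = e z"
proof -
  have "[(p - 1) * z + z = (p - z) + z] (mod p)"
  proof -
    have "(p - 1) * z + z = p * z" using assms by (simp add: diff_mult_distrib)
    moreover have "(p - z) + z = p" using assms by simp
    ultimately show ?thesis by (simp add: cong_def)
  qed
  then have "[(p - 1) * z = p - z] (mod p)" by (simp add: cong_add_rcancel_nat)
  then have "((p - 1) * z) mod p = (p - z) mod p" by (simp add: cong_def)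
  then have "e (p - z) = e ((p - 1) * z)" by (metis e_mod)
  also have "\<dots> = (e (p - 1) + e z) mod 4" using assms p_gt by (intro e_mult) auto
  also have "\<dots> = e z" using e_neg1 e_lt[of z] by simp
  finally show ?thesis .
qed

lemma N_sym_le: "N i j \<le> N j i"
proof -
  let ?A = "{u\<in>{0<..<p-1}. e u = i \<and> e (u + 1) = j}"
  let ?B = "{u\<in>{0<..<p-1}. e u = j \<and> e (u + 1) = i}"
  have "card ?A \<le> card ?B"
  proof (rule card_inj_on_le[of "\<lambda>u. p - 1 - u"])
    show "inj_on (\<lambda>u. p - 1 - u) ?A" by (rule inj_onI) auto
    show "(\<lambda>u. p - 1 - u) ` ?A \<subseteq> ?B"
    proof
      fix y assume "y \<in> (\<lambda>u. p - 1 - u) ` ?A"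
      then obtain u where u: "u \<in> ?A" and y: "y = p - 1 - u" by blast
      have y1: "y = p - (u + 1)" and y2: "y + 1 = p - u" using u y by auto
      have "e y = e (u + 1)" unfolding y1 by (rule e_neg) (use u in auto)
      moreover have "e (y + 1) = e u" unfolding y2 by (rule e_neg) (use u in auto)
      moreover have "y \<in> {0<..<p-1}" using u y by auto
      ultimately show "y \<in> ?B" using u by auto
    qed
  qed simp
  then show ?thesis by (simp add: N_def)
qed

lemma N_sym: "N i j = N j i"
  using N_sym_le[of i j] N_sym_le[of j i] by simp

lemma minv_pm1: "minv (p - 1) = p - 1"
proof -
  have "(p - 1) * (p - 1) = p * (p - 2) + 1" using p_gt
    by (cases p) (auto simp: algebra_simps)
  then have "((p - 1) * (p - 1)) mod p = (1 + p * (p - 2)) mod p" by simp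
  also have "\<dots> = 1 mod p" by (rule mod_mult_self2)
  finally have "((p - 1) * (p - 1)) mod p = 1" using p_gt by simp
  then have "(p - 1) mod p = minv (p - 1)" using p_gt by (intro minv_unique) auto
  then show ?thesis using p_gt by simp
qed

lemma nat_lt4: "a < (4::nat) \<Longrightarrow> a = 0 \<or> a = 1 \<or> a = 2 \<or> a = 3" by arith
lemma mod4_aux: assumes "(a::nat) < 4" "b < 4" "(a + b) mod 4 = 0" shows "b = (4 - a) mod 4"
  using nat_lt4[OF assms(1)] nat_lt4[OF assms(2)] assms(3) by (elim disjE; simp)
lemma mod4_aux2: assumes "i < (4::nat)" shows "(4 - (4 - i) mod 4) mod 4 = i"
  using nat_lt4[OF assms] by (elim disjE; simp)
lemma mod4_aux3: assumes "i < (4::nat)" "j < 4" shows "(((j + 4 - i) mod 4) + 4 - (4 - i) mod 4) mod 4 = j"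
  using nat_lt4[OF assms(1)] nat_lt4[OF assms(2)] by (elim disjE; simp)
lemma mod4_aux4: assumes "i < (4::nat)" "j < 4" shows "((4 - i) mod 4 + j) mod 4 = (j + 4 - i) mod 4"
  using nat_lt4[OF assms(1)] nat_lt4[OF assms(2)] by (elim disjE; simp)

lemma e_minv: assumes "u mod p \<noteq> 0" shows "e (minv u) = (4 - e u) mod 4"
proof -
  have "e (u * minv u) = e ((u * minv u) mod p)" by (rule e_mod[symmetric])
  also have "(u * minv u) mod p = 1" by (rule minv_mul[OF assms])
  finally have "e (u * minv u) = 0" using e_one by simp
  moreover have "e (u * minv u) = (e u + e (minv u)) mod 4" by (rule e_mult[OF assms minv_nz[OF assms]])
  ultimately have "(e u + e (minv u)) mod 4 = 0" by simp
  then show ?thesis by (rule mod4_aux[OF e_lt e_lt])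
qed

lemma N_inv_le: "N i j \<le> N ((4 - i) mod 4) ((j + 4 - i) mod 4)"
proof -
  let ?A = "{u\<in>{0<..<p-1}. e u = i \<and> e (u + 1) = j}"
  let ?B = "{u\<in>{0<..<p-1}. e u = (4 - i) mod 4 \<and> e (u + 1) = (j + 4 - i) mod 4}"
  have "card ?A \<le> card ?B"
  proof (rule card_inj_on_le[of minv])
    show "inj_on minv ?A"
    proof (rule inj_onI)
      fix u v assume u: "u \<in> ?A" and v: "v \<in> ?A" and eq: "minv u = minv v"
      have "u mod p \<noteq> 0" "v mod p \<noteq> 0" "u mod p = u" "v mod p = v" using u v by auto
      then have "minv (minv u) = u" "minv (minv v) = v" using minv_minv by auto
      then show "u = v" using eq by metis
    qed
    show "minv ` ?A \<subseteq> ?B"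
    proof
      fix y assume "y \<in> minv ` ?A"
      then obtain u where u: "u \<in> ?A" and y: "y = minv u" by blast
      have u0: "0 < u" "u < p - 1" and ui: "e u = i" and uj: "e (u + 1) = j" using u by auto
      have nz: "u mod p \<noteq> 0" using u0 by simp
      have nz1: "(u + 1) mod p \<noteq> 0" using u0 by simp
      have ynz: "y mod p \<noteq> 0" using minv_nz[OF nz] y by simp
      have ylt: "y < p" using minv_lt y by simp
      have "y \<noteq> p - 1"
      proof
        assume "y = p - 1"
        then have "minv y = p - 1" using minv_pm1 by simp
        moreover have "minv y = u" using y minv_minv[OF nz] u0 by simp
        ultimately show False using u0 by simp
      qed
      moreover have "y \<noteq> 0" using ynz by (intro notI) simp
      ultimately have yin: "y \<in> {0<..<p-1}" using ylt by simp
      have ey: "e y = (4 - i) mod 4" using e_minv[OF nz] ui y by simp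
      have m: "(y * (u + 1)) mod p = (y + 1) mod p"
      proof -
        have eq: "y * (u + 1) = u * minv u + y" using y by (simp add: algebra_simps)
        have "(y * (u + 1)) mod p = (u * minv u + y) mod p" by (simp only: eq)
        also have "\<dots> = ((u * minv u) mod p + y) mod p" by (simp only: mod_add_left_eq)
        also have "\<dots> = (y + 1) mod p" using minv_mul[OF nz] by (simp add: add.commute)
        finally show ?thesis .
      qed
      have "e (y + 1) = e ((y + 1) mod p)" by (rule e_mod[symmetric])
      also have "\<dots> = e ((y * (u + 1)) mod p)" using m by simp
      also have "\<dots> = e (y * (u + 1))" by (rule e_mod)
      also have "\<dots> = (e y + e (u + 1)) mod 4" by (rule e_mult[OF ynz nz1])
      also have "\<dots> = ((4 - i) mod 4 + j) mod 4" using ey uj by simp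
      also have "\<dots> = (j + 4 - i) mod 4" using mod4_aux4 ui uj e_lt by metis
      finally show "y \<in> ?B" using yin ey by simp
    qed
  qed simp
  then show ?thesis by (simp add: N_def)
qed

lemma N_inv: assumes "i < 4" "j < 4" shows "N i j = N ((4 - i) mod 4) ((j + 4 - i) mod 4)"
proof -
  have "(4 - (4 - i) mod 4) mod 4 = i" "(((j + 4 - i) mod 4) + 4 - (4 - i) mod 4) mod 4 = j"
    using mod4_aux2[OF assms(1)] mod4_aux3[OF assms] by auto
  then show ?thesis using N_inv_le[of i j] N_inv_le[of "(4 - i) mod 4" "(j + 4 - i) mod 4"] by simp
qed

lemma N_row: assumes "i < 4" shows "(\<Sum>j<4. N i j) + (if i = 0 then 1 else 0) = f"
proof -
  let ?S = "{u\<in>{0<..<p-1}. e u = i}"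
  have "(\<Sum>j<4. N i j) = (\<Sum>j<4. \<Sum>u\<in>{x\<in>?S. e (x + 1) = j}. (1::nat))"
    unfolding N_def by (intro sum.cong refl) (simp add: conj_assoc)
  also have "\<dots> = (\<Sum>u\<in>?S. 1)"
    by (rule sum.group) (auto simp: e_lt)
  also have "\<dots> = card ?S" by simp
  finally have s: "(\<Sum>j<4. N i j) = card ?S" .
  have "{u\<in>{0<..<p}. e u = i} = (if i = 0 then insert (p - 1) ?S else ?S)"
  proof (cases "i = 0")
    case True then show ?thesis using e_neg1 p_gt by auto
  next
    case False
    have "x \<in> {u\<in>{0<..<p}. e u = i} \<longleftrightarrow> x \<in> ?S" for x
    proof -
      have "x = p - 1 \<Longrightarrow> e x \<noteq> i" using e_neg1 False by simp
      then show ?thesis by (cases "x = p - 1") auto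
    qed
    then show ?thesis using False by auto
  qed
  moreover have "p - 1 \<notin> ?S" by simp
  ultimately have "card {u\<in>{0<..<p}. e u = i} = card ?S + (if i = 0 then 1 else 0)"
    by (simp split: if_splits)
  then show ?thesis using s card_e[OF assms] by simp
qed


definition X :: int where
  "X = int (N 0 0 + N 1 3 + N 2 2 + N 3 1) - int (N 0 2 + N 2 0 + N 1 1 + N 3 3)"
definition Y :: int where
  "Y = int (N 0 1 + N 1 0 + N 2 3 + N 3 2) - int (N 0 3 + N 3 0 + N 1 2 + N 2 1)"

lemma ipows: "\<i> ^ 2 = -1" "\<i> ^ 3 = - \<i>" "\<i> ^ 4 = 1" "\<i> ^ 5 = \<i>" "\<i> ^ 6 = -1"
  by (simp_all add: eval_nat_numeral)

lemma J_XY: "J = of_int X + \<i> * of_int Y"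
proof -
  have "J = (\<Sum>i<4. \<Sum>j<4. of_nat (N i j) * \<i> ^ (i + j))" by (rule J_N)
  also have "\<dots> = of_int X + \<i> * of_int Y"
    unfolding sum4 X_def Y_def by (simp add: ipows algebra_simps)
  finally show ?thesis .
qed

lemma XY_p: "X ^ 2 + Y ^ 2 = int p"
proof -
  have "J * cnj J = (of_int X + \<i> * of_int Y) * (of_int X - \<i> * of_int Y)"
    by (simp add: J_XY)
  also have "\<dots> = of_int (X ^ 2 + Y ^ 2)" by (simp add: algebra_simps power2_eq_square)
  finally have "of_int (X ^ 2 + Y ^ 2) = (of_nat p :: complex)" using J_norm by simp
  then have "of_int (X ^ 2 + Y ^ 2) = (of_int (int p) :: complex)" by simp
  then show ?thesis using of_int_eq_iff by blast
qed

lemma Y_eq: "Y = 2 * (int (N 0 1) - int (N 0 3))"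
proof -
  have a: "N 1 0 = N 0 1" "N 3 0 = N 0 3" "N 3 2 = N 2 3" "N 2 1 = N 1 2" by (rule N_sym)+
  have b: "N 2 3 = N 2 1" using N_inv[of 2 3] by simp
  have c: "N 2 1 = N 1 2" by (rule N_sym)
  show ?thesis unfolding Y_def a b c by simp
qed

end

lemma two_sq_aux:
  fixes a b c d P :: int
  assumes P: "P \<noteq> 0" and h1: "a^2 + b^2 = P" and h2: "c^2 + d^2 = P" and h: "a^2 * d^2 = b^2 * c^2"
  shows "a^2 = c^2"
proof -
  have "a^2 * P = a^2 * c^2 + a^2 * d^2" using h2 by (simp add: algebra_simps flip: h2)
  also have "\<dots> = a^2 * c^2 + b^2 * c^2" using h by simp
  also have "\<dots> = c^2 * P" using h1 by (simp add: algebra_simps flip: h1)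
  finally have "a^2 * P = c^2 * P" .
  then show ?thesis using P by simp
qed

lemma two_sq:
  fixes a b c d P :: int
  assumes pr: "prime P" and h1: "a^2 + b^2 = P" and h2: "c^2 + d^2 = P"
  shows "a^2 = c^2 \<or> a^2 = d^2"
proof -
  have P0: "P > 0" using pr prime_gt_0_int by blast
  have "(a*c + b*d)^2 + (a*d - b*c)^2 = (a^2 + b^2) * (c^2 + d^2)"
    by (simp add: power2_eq_square algebra_simps)
  then have id1: "(a*c + b*d)^2 + (a*d - b*c)^2 = P^2"
    using h1 h2 by (simp add: power2_eq_square)
  have "(a*c - b*d)^2 + (a*d + b*c)^2 = (a^2 + b^2) * (c^2 + d^2)"
    by (simp add: power2_eq_square algebra_simps)
  then have id2: "(a*c - b*d)^2 + (a*d + b*c)^2 = P^2"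
    using h1 h2 by (simp add: power2_eq_square)
  have "(a*d - b*c) * (a*d + b*c) = a^2 * (c^2 + d^2) - c^2 * (a^2 + b^2)"
    by (simp add: power2_eq_square algebra_simps)
  then have "(a*d - b*c) * (a*d + b*c) = P * (a^2 - c^2)"
    using h1 h2 by (simp add: algebra_simps)
  then have "P dvd (a*d - b*c) * (a*d + b*c)" by simp
  then have "P dvd (a*d - b*c) \<or> P dvd (a*d + b*c)" using pr by (simp add: prime_dvd_mult_iff)
  then show ?thesis
  proof
    assume "P dvd (a*d - b*c)"
    then obtain k where k: "a*d - b*c = P * k" by (auto elim: dvdE)
    from id1 k have "(a*c + b*d)^2 + P^2 * k^2 = P^2" by (simp add: power_mult_distrib)
    moreover have "(a*c + b*d)^2 \<ge> 0" by simp
    ultimately have "P^2 * k^2 \<le> P^2 * 1" by linarith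
    then have kk: "k^2 \<le> 1" using P0 by (simp add: mult_le_cancel_left)
    show ?thesis
    proof (cases "k = 0")
      case True
      then have "a*d = b*c" using k by simp
      then have "(a*d)^2 = (b*c)^2" by simp
      then have "a^2 * d^2 = b^2 * c^2" by (simp add: power_mult_distrib)
      then show ?thesis using two_sq_aux[OF _ h1 h2] P0 by simp
    next
      case False
      then have "k^2 \<ge> 1" by (simp add: power2_eq_square) (smt (verit) mult_le_cancel_left1 zero_less_mult_iff)
      then have "k^2 = 1" using kk by simp
      then have "(a*c + b*d)^2 = 0" using \<open>(a*c + b*d)^2 + P^2 * k^2 = P^2\<close> by simp
      then have "a*c = - (b*d)" by simp
      then have "(a*c)^2 = (b*d)^2" by simp
      then have "a^2 * c^2 = b^2 * d^2" by (simp add: power_mult_distrib)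
      moreover have "d^2 + c^2 = P" using h2 by simp
      ultimately have "a^2 = d^2" using two_sq_aux[OF _ h1, of d c] P0 by simp
      then show ?thesis by simp
    qed
  next
    assume "P dvd (a*d + b*c)"
    then obtain k where k: "a*d + b*c = P * k" by (auto elim: dvdE)
    from id2 k have "(a*c - b*d)^2 + P^2 * k^2 = P^2" by (simp add: power_mult_distrib)
    moreover have "(a*c - b*d)^2 \<ge> 0" by simp
    ultimately have "P^2 * k^2 \<le> P^2 * 1" by linarith
    then have kk: "k^2 \<le> 1" using P0 by (simp add: mult_le_cancel_left)
    show ?thesis
    proof (cases "k = 0")
      case True
      then have "a*d = - (b*c)" using k by simp
      then have "(a*d)^2 = (b*c)^2" by simp
      then have "a^2 * d^2 = b^2 * c^2" by (simp add: power_mult_distrib)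
      then show ?thesis using two_sq_aux[OF _ h1 h2] P0 by simp
    next
      case False
      then have "k^2 \<ge> 1" by (simp add: power2_eq_square) (smt (verit) mult_le_cancel_left1 zero_less_mult_iff)
      then have "k^2 = 1" using kk by simp
      then have "(a*c - b*d)^2 = 0" using \<open>(a*c - b*d)^2 + P^2 * k^2 = P^2\<close> by simp
      then have "a*c = b*d" by simp
      then have "(a*c)^2 = (b*d)^2" by simp
      then have "a^2 * c^2 = b^2 * d^2" by (simp add: power_mult_distrib)
      moreover have "d^2 + c^2 = P" using h2 by simp
      ultimately have "a^2 = d^2" using two_sq_aux[OF _ h1, of d c] P0 by simp
      then show ?thesis by simp
    qed
  qed
qed



context qr begin

lemma autocorr:
  fixes x c :: "nat \<Rightarrow> complex"
  assumes hx: "\<And>k. k \<in> {0<..<p} \<Longrightarrow> x k = c (e k)" and hx0: "x 0 = -1"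
    and d: "d \<in> {0<..<p}"
  shows "(\<Sum>k<p. x ((k + d) mod p) * cnj (x k)) =
     - c (e d) - cnj (c (e d)) + (\<Sum>i<4. \<Sum>j<4. of_nat (N i j) * (c ((e d + j) mod 4) * cnj (c ((e d + i) mod 4))))"
proof -
  have dnz: "d mod p \<noteq> 0" using d by simp
  define y where "y v = x ((d * v) mod p)" for v
  let ?F = "\<lambda>k. x ((k + d) mod p) * cnj (x k)"
  have "(\<Sum>k<p. ?F k) = (\<Sum>u<p. ?F ((d * u + 0) mod p))"
    using affine_reindex[OF dnz, of ?F 0] by simp
  also have "\<dots> = (\<Sum>u<p. y (u + 1) * cnj (y u))"
  proof (intro sum.cong refl)
    fix u
    have "((d * u + 0) mod p + d) mod p = (d * u + d) mod p"
      by (simp only: add_0_right mod_add_left_eq)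
    also have "d * u + d = d * (u + 1)" by (simp add: algebra_simps)
    finally have "((d * u + 0) mod p + d) mod p = (d * (u + 1)) mod p" .
    then show "?F ((d * u + 0) mod p) = y (u + 1) * cnj (y u)" by (simp add: y_def)
  qed
  also have "\<dots> = y 1 * cnj (y 0) + y (p - 1 + 1) * cnj (y (p - 1)) + (\<Sum>u\<in>{0<..<p-1}. y (u + 1) * cnj (y u))"
  proof -
    have "{..<p} = insert 0 (insert (p - 1) {0<..<p-1})" using p_gt by auto
    then show ?thesis using p_gt by (simp add: add.assoc)
  qed
  also have "y 0 = -1" using hx0 by (simp add: y_def)
  also have "y 1 = c (e d)" using hx[OF d] d by (simp add: y_def)
  also have "y (p - 1 + 1) = -1" using hx0 p_gt by (simp add: y_def)
  also have "y (p - 1) = c (e d)"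
  proof -
    have nz: "(d * (p - 1)) mod p \<noteq> 0" using nz_mult[OF dnz] p_gt by simp
    then have "(d * (p - 1)) mod p \<in> {0<..<p}" using p_gt by simp
    then have "y (p - 1) = c (e ((d * (p - 1)) mod p))" using hx by (simp add: y_def)
    also have "e ((d * (p - 1)) mod p) = e d" using e_mult[OF dnz, of "p - 1"] p_gt e_neg1 e_lt[of d] by simp
    finally show ?thesis .
  qed
  also have "(\<Sum>u\<in>{0<..<p-1}. y (u + 1) * cnj (y u)) =
      (\<Sum>u\<in>{0<..<p-1}. (\<lambda>i j. c ((e d + j) mod 4) * cnj (c ((e d + i) mod 4))) (e u) (e (u + 1)))"
  proof (intro sum.cong refl)
    fix u assume u: "u \<in> {0<..<p-1}"
    have yv: "y v = c ((e d + e v) mod 4)" if v: "v mod p \<noteq> 0" for v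
    proof -
      have nz: "(d * v) mod p \<noteq> 0" by (rule nz_mult[OF dnz v])
      then have "(d * v) mod p \<in> {0<..<p}" using p_gt by simp
      then have "y v = c (e ((d * v) mod p))" using hx by (simp add: y_def)
      also have "e ((d * v) mod p) = (e d + e v) mod 4" using e_mult[OF dnz v] by simp
      finally show ?thesis .
    qed
    have "u mod p \<noteq> 0" "(u + 1) mod p \<noteq> 0" using u by auto
    then show "y (u + 1) * cnj (y u) = (\<lambda>i j. c ((e d + j) mod 4) * cnj (c ((e d + i) mod 4))) (e u) (e (u + 1))"
      using yv by simp
  qed
  also have "\<dots> = (\<Sum>i<4. \<Sum>j<4. of_nat (N i j) * (c ((e d + j) mod 4) * cnj (c ((e d + i) mod 4))))"
    unfolding N_def by (rule sum_group2) (auto simp: e_lt)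
  finally show ?thesis by simp
qed


lemma norm_mult_cnj1: "norm z = 1 \<Longrightarrow> z * cnj z = 1"
  using complex_norm_square[of z] by simp

lemma hadamard_from:
  fixes x c :: "nat \<Rightarrow> complex"
  assumes hx: "\<And>k. k \<in> {0<..<p} \<Longrightarrow> x k = c (e k)" and hx0: "x 0 = -1"
    and hn: "\<And>j. j < 4 \<Longrightarrow> norm (c j) = 1" and hcs: "(\<Sum>j<4. c j) = 0"
    and hR: "\<And>m. m < 4 \<Longrightarrow> - c m - cnj (c m) +
        (\<Sum>i<4. \<Sum>j<4. of_nat (N i j) * (c ((m + j) mod 4) * cnj (c ((m + i) mod 4)))) = -1"
  shows "complex_hadamard (p + 1) (bordered_circ p x)"
proof -
  have xn: "norm (x k) = 1" if "k < p" for k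
  proof (cases "k = 0")
    case True then show ?thesis using hx0 by simp
  next
    case False
    then have "k \<in> {0<..<p}" using that by simp
    then show ?thesis using hx hn e_lt by simp
  qed
  have xx: "x k * cnj (x k) = 1" if "k < p" for k
    using norm_mult_cnj1[OF xn[OF that]] .
  have sumx: "(\<Sum>k<p. x k) = -1"
  proof -
    have "(\<Sum>k<p. x k) = x 0 + (\<Sum>k\<in>{0<..<p}. x k)" by (rule sum_shift_split)
    also have "(\<Sum>k\<in>{0<..<p}. x k) = (\<Sum>k\<in>{0<..<p}. c (e k))" using hx by (intro sum.cong) auto
    also have "\<dots> = of_nat f * (\<Sum>j<4. c j)" by (rule sum_e)
    finally show ?thesis using hx0 hcs by simp
  qed
  have H: "bordered_circ p x i (Suc k) = (if i = 0 then 1 else x ((k + p - (i - 1)) mod p))"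
    if "i < p + 1" for i k
    using that by (simp add: bordered_circ_def circ_def)
  have shift: "(\<Sum>k<p. x ((k + p - j') mod p)) = -1" if "j' < p" for j'
  proof -
    have "(\<Sum>k<p. x ((k + p - j') mod p)) = (\<Sum>k<p. x ((1 * k + (p - j')) mod p))"
      using that by (intro sum.cong refl) simp
    also have "\<dots> = -1" using affine_reindex[of 1 x "p - j'"] sumx p_gt by simp
    finally show ?thesis .
  qed
  show ?thesis unfolding complex_hadamard_def
  proof (intro conjI allI impI)
    fix i j assume i: "i < p + 1" and j: "j < p + 1"
    show "norm (bordered_circ p x i j) = 1"
      using xn p_gt by (simp add: bordered_circ_def circ_def)
  next
    fix i j assume i: "i < p + 1" and j: "j < p + 1"
    have split: "(\<Sum>k<p + 1. bordered_circ p x i k * cnj (bordered_circ p x j k))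
       = 1 + (\<Sum>k<p. bordered_circ p x i (Suc k) * cnj (bordered_circ p x j (Suc k)))"
      by (simp only: Suc_eq_plus1[symmetric] sum.lessThan_Suc_shift) (simp add: bordered_circ_def)
    show "(\<Sum>k<p + 1. bordered_circ p x i k * cnj (bordered_circ p x j k)) = (if i = j then of_nat (p + 1) else 0)"
    proof (cases "i = 0")
      case i0: True
      show ?thesis
      proof (cases "j = 0")
        case True then show ?thesis using i0 split by (simp add: H add.commute)
      next
        case False
        have "(\<Sum>k<p. bordered_circ p x i (Suc k) * cnj (bordered_circ p x j (Suc k)))
            = (\<Sum>k<p. cnj (x ((k + p - (j - 1)) mod p)))"
          using i0 False j by (simp add: H)
        also have "\<dots> = cnj (\<Sum>k<p. x ((k + p - (j - 1)) mod p))" by (rule cnj_sum[symmetric])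
        also have "\<dots> = -1" using shift[of "j - 1"] j False by simp
        finally show ?thesis using split i0 False by simp
      qed
    next
      case i1: False
      show ?thesis
      proof (cases "j = 0")
        case True
        have "(\<Sum>k<p. bordered_circ p x i (Suc k) * cnj (bordered_circ p x j (Suc k)))
            = (\<Sum>k<p. x ((k + p - (i - 1)) mod p))"
          using i1 True i by (simp add: H)
        also have "\<dots> = -1" using shift[of "i - 1"] i i1 by simp
        finally show ?thesis using split i1 True by simp
      next
        case j1: False
        define i' where "i' = i - 1"
        define j' where "j' = j - 1"
        have i': "i' < p" and j': "j' < p" using i j i1 j1 by (auto simp: i'_def j'_def)
        have inner: "(\<Sum>k<p. bordered_circ p x i (Suc k) * cnj (bordered_circ p x j (Suc k)))
            = (\<Sum>k<p. x ((k + (p - i')) mod p) * cnj (x ((k + (p - j')) mod p)))"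
          using i1 j1 i j i' j' by (simp add: H i'_def j'_def)
        show ?thesis
        proof (cases "i = j")
          case True
          have "(\<Sum>k<p. x ((k + (p - i')) mod p) * cnj (x ((k + (p - j')) mod p))) = (\<Sum>k<p. 1)"
            using True xx p_gt by (intro sum.cong refl) (simp add: i'_def j'_def)
          then show ?thesis using split inner True by simp
        next
          case False
          then have ij: "i' \<noteq> j'" using i1 j1 by (auto simp: i'_def j'_def)
          define d where "d = (j' + (p - i')) mod p"
          have d: "d \<in> {0<..<p}"
          proof -
            have "d < p" using p_gt by (simp add: d_def)
            moreover have "d \<noteq> 0"
            proof
              assume "d = 0"
              then have "p dvd j' + (p - i')" by (simp add: d_def dvd_eq_mod_eq_0)
              then obtain q where q: "j' + (p - i') = p * q" by (auto elim: dvdE)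
              have b1: "0 < j' + (p - i')" and b2: "j' + (p - i') < p * 2" using i' j' by auto
              have "q \<noteq> 0" using q b1 by auto
              moreover have "q < 2"
              proof (rule ccontr)
                assume "\<not> q < 2"
                then have "p * 2 \<le> p * q" by simp
                then show False using q b2 by simp
              qed
              ultimately have "q = 1" by simp
              then have "j' + (p - i') = p" using q by simp
              then show False using ij i' by simp
            qed
            ultimately show ?thesis by simp
          qed
          let ?G = "\<lambda>k. x ((k + (p - i')) mod p) * cnj (x ((k + (p - j')) mod p))"
          have "(\<Sum>k<p. ?G k) = (\<Sum>k<p. ?G ((1 * k + j') mod p))"
            using affine_reindex[of 1 ?G j'] p_gt by simp
          also have "\<dots> = (\<Sum>k<p. x ((k + d) mod p) * cnj (x k))"
          proof (intro sum.cong refl)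
            fix k assume k: "k \<in> {..<p}"
            have a: "((1 * k + j') mod p + (p - i')) mod p = (k + d) mod p"
              by (simp add: d_def mod_add_left_eq mod_add_right_eq add.assoc)
            have "((1 * k + j') mod p + (p - j')) mod p = (k + j' + (p - j')) mod p"
              by (simp add: mod_add_left_eq)
            also have "k + j' + (p - j') = k + p" using j' by simp
            finally have b: "((1 * k + j') mod p + (p - j')) mod p = k" using k by simp
            show "?G ((1 * k + j') mod p) = x ((k + d) mod p) * cnj (x k)" using a b by simp
          qed
          also have "\<dots> = -1"
            using autocorr[of x c, OF hx hx0 d] hR[OF e_lt[of d]] by simp
          finally show ?thesis using split inner False by simp
        qed
      qed
    qed
  qed
qed

end



lemma sum4g: "(\<Sum>i<4::nat. F i) = F 0 + F 1 + F 2 + F 3"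
  by (simp add: eval_nat_numeral)

lemma nat_lt4g: "a < (4::nat) \<Longrightarrow> a = 0 \<or> a = 1 \<or> a = 2 \<or> a = 3" by arith

lemma final_alg:
  fixes a t f :: complex and n :: "nat \<Rightarrow> nat \<Rightarrow> complex" and \<sigma> :: nat
  assumes hs: "n 1 0 = n 0 1" "n 1 1 = n 0 3" "n 1 3 = n 1 2" "n 2 0 = n 0 2" "n 2 1 = n 1 2"
     "n 2 2 = n 0 2" "n 2 3 = n 1 2" "n 3 0 = n 0 3" "n 3 1 = n 1 2" "n 3 2 = n 1 2" "n 3 3 = n 0 1"
    and r0: "n 0 0 + n 0 1 + n 0 2 + n 0 3 + 1 = f"
    and r1: "n 0 1 + n 0 3 + 2 * n 1 2 = f"
    and r2: "2 * n 0 2 + 2 * n 1 2 = f"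
    and ty: "2 * (n 0 1 - n 0 3) = t"
    and K1: "a * cnj a = 1" and K2: "t * (a - cnj a)^2 = 4 * (a + cnj a)"
    and s: "\<sigma> < 4"
  shows "- ([a, -a, cnj a, - cnj a] ! \<sigma>) - cnj ([a, -a, cnj a, - cnj a] ! \<sigma>) +
     (\<Sum>i<4. \<Sum>j<4. n i j * ([a, -a, cnj a, - cnj a] ! ((\<sigma> + j) mod 4) *
         cnj ([a, -a, cnj a, - cnj a] ! ((\<sigma> + i) mod 4)))) = -1" (is "?L = -1")
proof -
  define b where "b = cnj a"
  have K1': "a * b = 1" "b * a = 1" using K1 by (simp_all add: b_def mult.commute)
  have Phi: "(t/4) * (a^2 + b^2 - 2) - (a + b) = 0"
  proof -
    have "a^2 + b^2 - 2 = (a - b)^2 + 2 * (a * b - 1)" by (simp add: power2_eq_square algebra_simps)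
    then have "(t/4) * (a^2 + b^2 - 2) = (t * (a - b)^2) / 4" using K1' by simp
    also have "\<dots> = a + b" using K2 by (simp add: b_def)
    finally show ?thesis by simp
  qed
  have hB: "n 0 1 = n 0 3 + t/2" using ty by (simp add: field_simps)
  have "2 * n 0 2 + 2 * n 1 2 = n 0 1 + n 0 3 + 2 * n 1 2" using r1 r2 by simp
  then have c2: "2 * n 0 2 = n 0 1 + n 0 3" by simp
  have hC: "n 0 2 = n 0 3 + t/4"
  proof -
    have "n 0 2 = (2 * n 0 2) / 2" by simp
    also have "\<dots> = (n 0 1 + n 0 3) / 2" using c2 by simp
    also have "\<dots> = n 0 3 + t/4" unfolding hB by (simp add: field_simps)
    finally show ?thesis .
  qed
  have hE: "n 1 2 = f/2 - n 0 3 - t/4"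
  proof -
    have "n 1 2 = (f - 2 * n 0 2) / 2" using r2 by (simp add: field_simps flip: r2)
    then show ?thesis unfolding hC by (simp add: field_simps)
  qed
  have hA: "n 0 0 = f - 1 - 3 * n 0 3 - 3 * t / 4"
  proof -
    have "n 0 0 = f - n 0 1 - n 0 2 - n 0 3 - 1" using r0 by (simp add: algebra_simps flip: r0)
    also have "\<dots> = f - (n 0 3 + t/2) - (n 0 3 + t/4) - n 0 3 - 1" unfolding hB hC by simp
    also have "\<dots> = f - 1 - 3 * n 0 3 - 3 * t / 4" by (simp add: field_simps)
    finally show ?thesis .
  qed
  have a0: "a \<noteq> 0" using K1 by auto
  have ca: "cnj a = 1 / a" using K1 a0 by (simp add: field_simps)
  have PhiA: "(t/4) * (a^2 + (1/a)^2 - 2) - (a + 1/a) = 0" using Phi unfolding b_def ca .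
  have q: "[a, -a, cnj a, - cnj a] ! 0 = a" "[a, -a, cnj a, - cnj a] ! 1 = -a"
     "[a, -a, cnj a, - cnj a] ! 2 = cnj a" "[a, -a, cnj a, - cnj a] ! 3 = - cnj a"
    by (simp_all add: eval_nat_numeral)
  from nat_lt4g[OF s] show ?thesis
  proof (elim disjE)
    assume s0: "\<sigma> = 0"
    have "?L + 1 = ((t/4) * (a^2 + (1/a)^2 - 2) - (a + 1/a))"
      unfolding sum4g hs hA hB hC hE s0 by (simp add: q ca) (simp add: field_simps power2_eq_square a0)
    then have "?L + 1 = 0" using PhiA by simp
    then show ?thesis by (simp only: eq_neg_iff_add_eq_0)
  next
    assume s0: "\<sigma> = 1"
    have "?L + 1 = - ((t/4) * (a^2 + (1/a)^2 - 2) - (a + 1/a))"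
      unfolding sum4g hs hA hB hC hE s0 by (simp add: q ca) (simp add: field_simps power2_eq_square a0)
    then have "?L + 1 = 0" using PhiA by simp
    then show ?thesis by (simp only: eq_neg_iff_add_eq_0)
  next
    assume s0: "\<sigma> = 2"
    have "?L + 1 = ((t/4) * (a^2 + (1/a)^2 - 2) - (a + 1/a))"
      unfolding sum4g hs hA hB hC hE s0 by (simp add: q ca) (simp add: field_simps power2_eq_square a0)
    then have "?L + 1 = 0" using PhiA by simp
    then show ?thesis by (simp only: eq_neg_iff_add_eq_0)
  next
    assume s0: "\<sigma> = 3"
    have "?L + 1 = - ((t/4) * (a^2 + (1/a)^2 - 2) - (a + 1/a))"
      unfolding sum4g hs hA hB hC hE s0 by (simp add: q ca) (simp add: field_simps power2_eq_square a0)
    then have "?L + 1 = 0" using PhiA by simp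
    then show ?thesis by (simp only: eq_neg_iff_add_eq_0)
  qed
qed


context qr begin

lemma cyc_class_eq: assumes j: "j < 4" shows "cyc_class p g j = {u\<in>{0<..<p}. e u = j}"
proof
  show "cyc_class p g j \<subseteq> {u\<in>{0<..<p}. e u = j}"
  proof
    fix b assume "b \<in> cyc_class p g j"
    then obtain k where b: "b = g ^ (4 * k + j) mod p" by (auto simp: cyc_class_def)
    have "b \<noteq> 0" using g_nz b by simp
    moreover have "b < p" using b p_gt by simp
    moreover have "e b = j" using b e_pow[of "4 * k + j"] j by simp
    ultimately show "b \<in> {u\<in>{0<..<p}. e u = j}" by simp
  qed
next
  show "{u\<in>{0<..<p}. e u = j} \<subseteq> cyc_class p g j"
  proof
    fix u assume u: "u \<in> {u\<in>{0<..<p}. e u = j}"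
    then have nz: "u mod p \<noteq> 0" and um: "u mod p = u" by auto
    have "ind u mod 4 = j" using u by (simp add: e_def)
    then have "ind u = 4 * (ind u div 4) + j" by (metis div_mult_mod_eq mult.commute)
    then have "u = g ^ (4 * (ind u div 4) + j) mod p" using pow_ind[OF nz] um by metis
    then show "u \<in> cyc_class p g j" by (auto simp: cyc_class_def)
  qed
qed

lemma card_cyc: assumes j: "0 < j" "j < 4"
  shows "card {b \<in> cyc_class p g 0. (b + 1) mod p \<in> cyc_class p g j} = N 0 j"
proof -
  have mem: "b \<in> {b \<in> cyc_class p g 0. (b + 1) mod p \<in> cyc_class p g j} \<longleftrightarrow> b \<in> {u\<in>{0<..<p-1}. e u = 0 \<and> e (u + 1) = j}" for b
  proof
    assume "b \<in> {b \<in> cyc_class p g 0. (b + 1) mod p \<in> cyc_class p g j}"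
    then have b: "0 < b" "b < p" "e b = 0" and b1: "(b + 1) mod p \<in> {0<..<p}" "e ((b + 1) mod p) = j"
      using cyc_class_eq[of 0] cyc_class_eq[OF j(2)] by auto
    have "b \<noteq> p - 1" using b1 p_gt by auto
    then have "b < p - 1" using b by simp
    then show "b \<in> {u\<in>{0<..<p-1}. e u = 0 \<and> e (u + 1) = j}" using b b1 by simp
  next
    assume "b \<in> {u\<in>{0<..<p-1}. e u = 0 \<and> e (u + 1) = j}"
    then have b: "0 < b" "b < p - 1" "e b = 0" "e (b + 1) = j" by auto
    then have "(b + 1) mod p = b + 1" by simp
    then show "b \<in> {b \<in> cyc_class p g 0. (b + 1) mod p \<in> cyc_class p g j}"
      using b cyc_class_eq[of 0] cyc_class_eq[OF j(2)] by auto
  qed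
  then have "{b \<in> cyc_class p g 0. (b + 1) mod p \<in> cyc_class p g j} = {u\<in>{0<..<p-1}. e u = 0 \<and> e (u + 1) = j}"
    by blast
  then show ?thesis by (simp add: N_def)
qed

lemma N_rels: "N 1 0 = N 0 1" "N 1 1 = N 0 3" "N 1 3 = N 1 2" "N 2 0 = N 0 2" "N 2 1 = N 1 2"
     "N 2 2 = N 0 2" "N 2 3 = N 1 2" "N 3 0 = N 0 3" "N 3 1 = N 1 2" "N 3 2 = N 1 2" "N 3 3 = N 0 1"
proof -
  have s: "N 1 0 = N 0 1" "N 3 0 = N 0 3" "N 2 1 = N 1 2" "N 2 0 = N 0 2" "N 3 1 = N 1 3" "N 3 2 = N 2 3"
    by (rule N_sym)+
  have i11: "N 1 1 = N 3 0" using N_inv[of 1 1] by simp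
  have i13: "N 1 3 = N 3 2" using N_inv[of 1 3] by simp
  have i23: "N 2 3 = N 2 1" using N_inv[of 2 3] by simp
  have i22: "N 2 2 = N 2 0" using N_inv[of 2 2] by simp
  have i33: "N 3 3 = N 1 0" using N_inv[of 3 3] by simp
  show "N 1 0 = N 0 1" "N 1 1 = N 0 3" "N 1 3 = N 1 2" "N 2 0 = N 0 2" "N 2 1 = N 1 2"
     "N 2 2 = N 0 2" "N 2 3 = N 1 2" "N 3 0 = N 0 3" "N 3 1 = N 1 2" "N 3 2 = N 1 2" "N 3 3 = N 0 1"
    using s i11 i13 i23 i22 i33 by simp_all
qed

lemma N_rows: "N 0 0 + N 0 1 + N 0 2 + N 0 3 + 1 = f" "N 0 1 + N 0 3 + 2 * N 1 2 = f"
  "2 * N 0 2 + 2 * N 1 2 = f"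
proof -
  have r0: "N 0 0 + N 0 1 + N 0 2 + N 0 3 + 1 = f" using N_row[of 0] by (simp add: sum4)
  have r1: "N 1 0 + N 1 1 + N 1 2 + N 1 3 = f" using N_row[of 1] by (simp add: sum4)
  have r2: "N 2 0 + N 2 1 + N 2 2 + N 2 3 = f" using N_row[of 2] by (simp add: sum4)
  show "N 0 0 + N 0 1 + N 0 2 + N 0 3 + 1 = f" by (rule r0)
  show "N 0 1 + N 0 3 + 2 * N 1 2 = f" using r1 N_rels by simp
  show "2 * N 0 2 + 2 * N 1 2 = f" using r2 N_rels by simp
qed

end

lemma a_props:
  fixes t :: int and a :: complex
  assumes t: "t > 0"
    and a: "a = Complex ((1 - sqrt (1 + (real_of_int t)^2)) / real_of_int t)
                     (sqrt (-2 + 2 * sqrt (1 + (real_of_int t)^2)) / real_of_int t)"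
  shows "norm a = 1" and "of_int t * (a - cnj a)^2 = 4 * (a + cnj a)"
proof -
  define T where "T = real_of_int t"
  define S where "S = sqrt (1 + T^2)"
  define \<alpha> where "\<alpha> = (1 - S) / T"
  define \<beta> where "\<beta> = sqrt (-2 + 2 * S) / T"
  have aa: "a = Complex \<alpha> \<beta>" using a by (simp add: \<alpha>_def \<beta>_def S_def T_def)
  have T0: "T > 0" using t by (simp add: T_def)
  have S1: "1 \<le> S" unfolding S_def by (rule real_le_rsqrt) simp
  have S2: "S^2 = 1 + T^2" unfolding S_def by simp
  have b2: "\<beta>^2 = (-2 + 2 * S) / T^2" using S1 by (simp add: \<beta>_def power_divide)
  have a2: "\<alpha>^2 = (1 - 2 * S + S^2) / T^2" by (simp add: \<alpha>_def power_divide power2_eq_square algebra_simps)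
  have "\<alpha>^2 + \<beta>^2 = 1" using T0 unfolding a2 b2 S2 by (simp add: field_simps)
  then show "norm a = 1" by (simp add: aa complex_norm)
  have d: "a - cnj a = Complex 0 (2 * \<beta>)" by (simp add: aa complex_eq_iff)
  have s: "a + cnj a = Complex (2 * \<alpha>) 0" by (simp add: aa complex_eq_iff)
  have key: "- (4 * T * \<beta>^2) = 8 * \<alpha>"
    using T0 unfolding b2 by (simp add: \<alpha>_def field_simps power2_eq_square)
  have "of_int t * (a - cnj a)^2 = Complex (- (4 * T * \<beta>^2)) 0"
    unfolding d by (simp add: complex_eq_iff power2_eq_square T_def)
  also have "\<dots> = Complex (8 * \<alpha>) 0" using key by simp
  also have "\<dots> = 4 * (a + cnj a)" unfolding s by (simp add: complex_eq_iff)
  finally show "of_int t * (a - cnj a)^2 = 4 * (a + cnj a)" .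
qed


theorem propositionC:
  fixes p g r :: nat and s t :: int and c :: "nat \<Rightarrow> complex" and a :: complex
    and x :: "nat \<Rightarrow> complex"
  assumes "prime p" and "p mod 8 = 1"
    and "int p = s ^ 2 + t ^ 2" and "s mod 4 = 1" and "t > 0"
    and "residue_primroot p g"
    and "card {b \<in> cyc_class p g 0. (b + 1) mod p \<in> cyc_class p g 1}
         > card {b \<in> cyc_class p g 0. (b + 1) mod p \<in> cyc_class p g 3}"
    and "a = Complex ((1 - sqrt (1 + (real_of_int t)^2)) / real_of_int t)
                     (sqrt (-2 + 2 * sqrt (1 + (real_of_int t)^2)) / real_of_int t)"
    and "r < 4"
    and "\<And>j. c j = [a, -a, cnj a, -cnj a] ! ((j + r) mod 4)"
    and "\<And>j k. j < 4 \<Longrightarrow> k \<in> cyc_class p g j \<Longrightarrow> x k = c j"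
    and "x 0 = - (of_nat (p - 1) / 4) * (c 0 + c 1 + c 2 + c 3) - 1"
  shows "complex_hadamard (p + 1) (bordered_circ p x)"
proof -
  interpret Q: qr p g using assms(1,2,6) by unfold_locales
  define q where "q = [a, -a, cnj a, -cnj a]"
  have cq: "c j = q ! ((j + r) mod 4)" for j using assms(10) by (simp add: q_def)
  have an: "norm a = 1" and K2: "of_int t * (a - cnj a)^2 = 4 * (a + cnj a)"
    using a_props[OF assms(5,8)] by auto
  have K1: "a * cnj a = 1" using Q.norm_mult_cnj1[OF an] .
  have qv: "q ! 0 = a" "q ! 1 = -a" "q ! 2 = cnj a" "q ! 3 = - cnj a" "q ! Suc 0 = -a" "q ! Suc (Suc 0) = cnj a" "q ! Suc (Suc (Suc 0)) = - cnj a"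
    by (simp_all add: q_def eval_nat_numeral)
  have qn: "norm (q ! k) = 1" if "k < 4" for k
    using nat_lt4g[OF that] an by (elim disjE) (simp_all add: qv)
  have hn: "norm (c j) = 1" if "j < 4" for j unfolding cq by (rule qn) simp
  have hcs: "(\<Sum>j<4. c j) = 0"
    using nat_lt4g[OF assms(9)] unfolding sum4g cq by (elim disjE) (simp_all add: qv)
  have hx0: "x 0 = -1" using assms(12) hcs by (simp add: sum4g)
  have hx: "x k = c (Q.e k)" if "k \<in> {0<..<p}" for k
  proof -
    have "k \<in> cyc_class p g (Q.e k)" using Q.cyc_class_eq[OF Q.e_lt[of k]] that by simp
    then show ?thesis using assms(11) Q.e_lt by blast
  qed
  have pr: "prime (int p)" using assms(1) by simp
  have "Q.Y^2 + Q.X^2 = int p" using Q.XY_p by simp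
  then have "Q.Y^2 = t^2 \<or> Q.Y^2 = s^2"
    using two_sq[OF pr, of Q.Y Q.X t s] assms(3) by (simp add: add.commute)
  moreover have "Q.Y^2 \<noteq> s^2"
  proof
    assume h: "Q.Y^2 = s^2"
    have "even (Q.Y^2)" using Q.Y_eq by simp
    moreover have "odd s" using assms(4) by presburger
    ultimately show False using h by simp
  qed
  ultimately have Y2: "Q.Y^2 = t^2" by blast
  have "Q.N 0 1 > Q.N 0 3" using assms(7) Q.card_cyc[of 1] Q.card_cyc[of 3] by simp
  then have "Q.Y > 0" using Q.Y_eq by simp
  then have Yt: "Q.Y = t" using Y2 assms(5) by (metis power2_eq_iff neg_less_0_iff_less less_asym)
  have hs: "(of_nat (Q.N 1 0)::complex) = of_nat (Q.N 0 1)" "(of_nat (Q.N 1 1)::complex) = of_nat (Q.N 0 3)"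
     "(of_nat (Q.N 1 3)::complex) = of_nat (Q.N 1 2)" "(of_nat (Q.N 2 0)::complex) = of_nat (Q.N 0 2)"
     "(of_nat (Q.N 2 1)::complex) = of_nat (Q.N 1 2)" "(of_nat (Q.N 2 2)::complex) = of_nat (Q.N 0 2)"
     "(of_nat (Q.N 2 3)::complex) = of_nat (Q.N 1 2)" "(of_nat (Q.N 3 0)::complex) = of_nat (Q.N 0 3)"
     "(of_nat (Q.N 3 1)::complex) = of_nat (Q.N 1 2)" "(of_nat (Q.N 3 2)::complex) = of_nat (Q.N 1 2)"
     "(of_nat (Q.N 3 3)::complex) = of_nat (Q.N 0 1)"
    using Q.N_rels by simp_all
  have r0: "(of_nat (Q.N 0 0)::complex) + of_nat (Q.N 0 1) + of_nat (Q.N 0 2) + of_nat (Q.N 0 3) + 1 = of_nat Q.f"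
  proof -
    have "(of_nat (Q.N 0 0 + Q.N 0 1 + Q.N 0 2 + Q.N 0 3 + 1)::complex) = of_nat Q.f" using Q.N_rows(1) by simp
    then show ?thesis by (simp add: add_ac)
  qed
  have r1: "(of_nat (Q.N 0 1)::complex) + of_nat (Q.N 0 3) + 2 * of_nat (Q.N 1 2) = of_nat Q.f"
  proof -
    have "(of_nat (Q.N 0 1 + Q.N 0 3 + 2 * Q.N 1 2)::complex) = of_nat Q.f" using Q.N_rows(2) by simp
    then show ?thesis by simp
  qed
  have r2: "2 * (of_nat (Q.N 0 2)::complex) + 2 * of_nat (Q.N 1 2) = of_nat Q.f"
  proof -
    have "(of_nat (2 * Q.N 0 2 + 2 * Q.N 1 2)::complex) = of_nat Q.f" using Q.N_rows(3) by simp
    then show ?thesis by simp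
  qed
  have ty: "2 * ((of_nat (Q.N 0 1)::complex) - of_nat (Q.N 0 3)) = of_int t"
  proof -
    have "t = 2 * (int (Q.N 0 1) - int (Q.N 0 3))" using Yt Q.Y_eq by simp
    then have "(of_int t::complex) = of_int (2 * (int (Q.N 0 1) - int (Q.N 0 3)))" by simp
    then show ?thesis by simp
  qed
  have hR: "- c m - cnj (c m) +
        (\<Sum>i<4. \<Sum>j<4. of_nat (Q.N i j) * (c ((m + j) mod 4) * cnj (c ((m + i) mod 4)))) = -1"
    if m: "m < 4" for m
  proof -
    define \<sigma> where "\<sigma> = (m + r) mod 4"
    have cm: "c ((m + k) mod 4) = q ! ((\<sigma> + k) mod 4)" for k
    proof -
      have "((m + k) mod 4 + r) mod 4 = (m + k + r) mod 4" by (rule mod_add_left_eq)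
      moreover have "((m + r) mod 4 + k) mod 4 = (m + r + k) mod 4" by (rule mod_add_left_eq)
      ultimately show ?thesis unfolding cq \<sigma>_def by (simp add: add_ac)
    qed
    have cm0: "c m = q ! \<sigma>" unfolding cq \<sigma>_def ..
    have s4: "\<sigma> < 4" by (simp add: \<sigma>_def)
    note fa = final_alg[of "\<lambda>i j. of_nat (Q.N i j)" "of_nat Q.f" "of_int t" a \<sigma>, OF hs r0 r1 r2 ty K1 K2 s4]
    show ?thesis unfolding cm cm0 using fa by (simp add: q_def)
  qed
  show ?thesis by (rule Q.hadamard_from[OF hx hx0 hn hcs hR])
qed


end
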